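(* Let $G$ be a group, $K\lhd G$ a normal subgroup and $L\subset K$ a subset whose normal closure in $G$ is $K$. Then $L^{\#\#}=K^{\#\#}$ as ideals of $\kappa G^\#$.
   Context: Let $\kappa$ be a field of characteristic $0$. For a group $G$, let $*:\kappa G\to\kappa G$ be the $\kappa$-linear map with $g^*=g^{-1}$ for $g\in G$, and $(\kappa G)^*$ its fixed points. $A_G$ is the quotient of $\kappa G$ by the two-sided ideal generated by all $ab-ba$ with $a\in\kappa G$, $b\in(\kappa G)^*$; $*$ descends to $A_G$, and $\kappa G^\#=\{x\in A_G:x^*=x\}$ (a commutative subring of the centre of $A_G$). Group elements are identified with their images in $A_G$, and $\bar x=\tfrac12(x+x^* )$ for $x\in A_G$. For a subset $L\subset G$, $L^{\#\#}$ is the ideal of $\kappa G^\#$ generated by $\{\overline{xl}-\overline{xl^{-1}}: x\in A_G,\ l\in L\}$ (equivalently by $\{\overline{bl}-\overline{bl^{-1}}: b\in B, l\in L\}$ for any generating set $B$ of the $\kappa G^\#$-module $\Lambda_G=\{x\in A_G:x^*=-x\}$). *)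

theory Defs
  imports "HOL-Algebra.Algebra"
begin

text \<open>Elements of kG are finitely supported functions from the carrier of G to k
  (identified with formal sums; a function f stands for the sum over g of f g times g),
  with pointwise addition and convolution as multiplication.\<close>

definition gr_carrier :: "('a, 'm) monoid_scheme \<Rightarrow> ('a \<Rightarrow> 'k::field) set" where
  "gr_carrier G = {f. finite {g. f g \<noteq> 0} \<and> (\<forall>g. g \<notin> carrier G \<longrightarrow> f g = 0)}"

definition gr_mult :: "('a, 'm) monoid_scheme \<Rightarrow> ('a \<Rightarrow> 'k::field) \<Rightarrow> ('a \<Rightarrow> 'k) \<Rightarrow> ('a \<Rightarrow> 'k)" where
  "gr_mult G f h = (\<lambda>g. if g \<in> carrier G
                         then (\<Sum>x\<in>{x. f x \<noteq> 0}. f x * h (inv\<^bsub>G\<^esub> x \<otimes>\<^bsub>G\<^esub> g))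
                         else 0)"

definition gr_one :: "('a, 'm) monoid_scheme \<Rightarrow> ('a \<Rightarrow> 'k::field)" where
  "gr_one G = (\<lambda>g. if g = \<one>\<^bsub>G\<^esub> then 1 else 0)"

definition group_ring :: "('a, 'm) monoid_scheme \<Rightarrow> ('a \<Rightarrow> 'k::field) ring" where
  "group_ring G =
    \<lparr> partial_object.carrier = gr_carrier G, monoid.mult = gr_mult G, monoid.one = gr_one G,
      ring.zero = (\<lambda>g. 0), ring.add = (\<lambda>f h g. f g + h g) \<rparr>"

definition gel :: "('a, 'm) monoid_scheme \<Rightarrow> 'a \<Rightarrow> ('a \<Rightarrow> 'k::field)" where
  "gel G g = (\<lambda>x. if x = g then 1 else 0)"

text \<open>The k-linear involution with g* = g^-1.\<close>
definition gstar :: "('a, 'm) monoid_scheme \<Rightarrow> ('a \<Rightarrow> 'k::field) \<Rightarrow> ('a \<Rightarrow> 'k)" where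
  "gstar G f = (\<lambda>g. if g \<in> carrier G then f (inv\<^bsub>G\<^esub> g) else 0)"

definition comm_ideal :: "('a, 'm) monoid_scheme \<Rightarrow> ('a \<Rightarrow> 'k::field) set" where
  "comm_ideal G = genideal (group_ring G)
     {a \<otimes>\<^bsub>group_ring G\<^esub> b \<ominus>\<^bsub>group_ring G\<^esub> b \<otimes>\<^bsub>group_ring G\<^esub> a | a b.
        a \<in> carrier (group_ring G) \<and> b \<in> carrier (group_ring G) \<and> gstar G b = b}"

definition AG :: "('a, 'm) monoid_scheme \<Rightarrow> ('a \<Rightarrow> 'k::field) set ring" where
  "AG G = group_ring G Quot comm_ideal G"

definition cls :: "('a, 'm) monoid_scheme \<Rightarrow> ('a \<Rightarrow> 'k::field) \<Rightarrow> ('a \<Rightarrow> 'k) set" where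
  "cls G x = comm_ideal G +>\<^bsub>group_ring G\<^esub> x"

definition astar :: "('a, 'm) monoid_scheme \<Rightarrow> ('a \<Rightarrow> 'k::field) set \<Rightarrow> ('a \<Rightarrow> 'k) set" where
  "astar G Z = image (gstar G) Z"

text \<open>bar x = (x + x*)/2 in A_G.\<close>
definition abar :: "('a, 'm) monoid_scheme \<Rightarrow> ('a \<Rightarrow> 'k::field) set \<Rightarrow> ('a \<Rightarrow> 'k) set" where
  "abar G Z = cls G (\<lambda>g. if g = \<one>\<^bsub>G\<^esub> then 1 / 2 else 0) \<otimes>\<^bsub>AG G\<^esub> (Z \<oplus>\<^bsub>AG G\<^esub> astar G Z)"

text \<open>kG^# = fixed points of * in A_G, as a (commutative) subring of A_G.\<close>
definition sharp_set :: "('a, 'm) monoid_scheme \<Rightarrow> ('a \<Rightarrow> 'k::field) set set" where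
  "sharp_set G = {Z \<in> carrier (AG G). astar G Z = Z}"

definition sharp_ring :: "('a, 'm) monoid_scheme \<Rightarrow> ('a \<Rightarrow> 'k::field) set ring" where
  "sharp_ring G = (AG G)\<lparr>carrier := sharp_set G\<rparr>"

text \<open>L^## : the ideal of kG^# generated by bar(x l) - bar(x l^-1), x in A_G, l in L.\<close>
definition sharp_ideal :: "('a, 'm) monoid_scheme \<Rightarrow> 'a set \<Rightarrow> ('a \<Rightarrow> 'k::field) set set" where
  "sharp_ideal G L = genideal (sharp_ring G)
     {abar G (Z \<otimes>\<^bsub>AG G\<^esub> cls G (gel G l)) \<ominus>\<^bsub>AG G\<^esub> abar G (Z \<otimes>\<^bsub>AG G\<^esub> cls G (gel G (inv\<^bsub>G\<^esub> l))) | Z l.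
        Z \<in> carrier (AG G) \<and> l \<in> L}"

definition normal_closure :: "('a, 'm) monoid_scheme \<Rightarrow> 'a set \<Rightarrow> 'a set" where
  "normal_closure G L = generate G (\<Union>g\<in>carrier G. (\<lambda>l. g \<otimes>\<^bsub>G\<^esub> l \<otimes>\<^bsub>G\<^esub> inv\<^bsub>G\<^esub> g) ` L)"

end

theory Submission
  imports Defs
begin


definition sp :: "('a \<Rightarrow> 'k::field) \<Rightarrow> 'a set" where "sp f = {x. f x \<noteq> 0}"

lemma swap4: "(\<Sum>y\<in>C. \<Sum>w\<in>D. \<Sum>x\<in>A. \<Sum>z\<in>B. F y w x z) = (\<Sum>x\<in>A. \<Sum>z\<in>B. \<Sum>w\<in>D. \<Sum>y\<in>C. F y w x z)"
proof -
  have "(\<Sum>y\<in>C. \<Sum>w\<in>D. \<Sum>x\<in>A. \<Sum>z\<in>B. F y w x z) = (\<Sum>y\<in>C. \<Sum>x\<in>A. \<Sum>w\<in>D. \<Sum>z\<in>B. F y w x z)"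
    by (rule sum.cong[OF refl], rule sum.swap)
  also have "\<dots> = (\<Sum>y\<in>C. \<Sum>x\<in>A. \<Sum>z\<in>B. \<Sum>w\<in>D. F y w x z)"
    by (rule sum.cong[OF refl], rule sum.cong[OF refl], rule sum.swap)
  also have "\<dots> = (\<Sum>x\<in>A. \<Sum>y\<in>C. \<Sum>z\<in>B. \<Sum>w\<in>D. F y w x z)"
    by (rule sum.swap)
  also have "\<dots> = (\<Sum>x\<in>A. \<Sum>z\<in>B. \<Sum>y\<in>C. \<Sum>w\<in>D. F y w x z)"
    by (rule sum.cong[OF refl], rule sum.swap)
  also have "\<dots> = (\<Sum>x\<in>A. \<Sum>z\<in>B. \<Sum>w\<in>D. \<Sum>y\<in>C. F y w x z)"
    by (rule sum.cong[OF refl], rule sum.cong[OF refl], rule sum.swap)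
  finally show ?thesis .
qed

lemma helper1: "(if P then (\<Sum>x\<in>A. \<Sum>z\<in>B. if Q x z then a x z else 0) * (c::'k::field) else 0) =
   (\<Sum>x\<in>A. \<Sum>z\<in>B. if Q x z \<and> P then a x z * c else 0)"
  by (cases P) (auto simp: sum_distrib_right intro!: sum.cong)

lemma helper2: "(if P then (c::'k::field) * (\<Sum>x\<in>A. \<Sum>z\<in>B. if Q x z then a x z else 0) else 0) =
   (\<Sum>x\<in>A. \<Sum>z\<in>B. if Q x z \<and> P then c * a x z else 0)"
  by (cases P) (auto simp: sum_distrib_left intro!: sum.cong)

lemma swap3: "(\<Sum>z\<in>B. \<Sum>w\<in>D. \<Sum>u\<in>E. F z w u) = (\<Sum>u\<in>E. \<Sum>z\<in>B. \<Sum>w\<in>D. F z w u)"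
proof -
  have "(\<Sum>z\<in>B. \<Sum>w\<in>D. \<Sum>u\<in>E. F z w u) = (\<Sum>z\<in>B. \<Sum>u\<in>E. \<Sum>w\<in>D. F z w u)"
    by (rule sum.cong[OF refl], rule sum.swap)
  also have "\<dots> = (\<Sum>u\<in>E. \<Sum>z\<in>B. \<Sum>w\<in>D. F z w u)" by (rule sum.swap)
  finally show ?thesis .
qed

context group begin

lemma grc_sp: "f \<in> gr_carrier G \<Longrightarrow> finite (sp f) \<and> sp f \<subseteq> carrier G"
  unfolding gr_carrier_def sp_def by auto

lemma grcI: "finite (sp f) \<Longrightarrow> (\<And>g. g \<notin> carrier G \<Longrightarrow> f g = 0) \<Longrightarrow> f \<in> gr_carrier G"
  unfolding gr_carrier_def sp_def by auto

lemma conv: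
  fixes f h :: "'a \<Rightarrow> 'k::field"
  assumes "f \<in> gr_carrier G" "h \<in> gr_carrier G" "finite A" "finite B" "A \<subseteq> carrier G" "B \<subseteq> carrier G"
    "sp f \<subseteq> A" "sp h \<subseteq> B"
  shows "gr_mult G f h g = (\<Sum>x\<in>A. \<Sum>z\<in>B. if x \<otimes> z = g then f x * h z else 0)"
proof (cases "g \<in> carrier G")
  case False
  have "\<And>x z. x \<in> A \<Longrightarrow> z \<in> B \<Longrightarrow> x \<otimes> z \<noteq> g" using False assms(5,6) by auto
  then show ?thesis using False by (simp add: gr_mult_def)
next
  case True
  have "gr_mult G f h g = (\<Sum>x\<in>sp f. f x * h (inv x \<otimes> g))"
    using True by (simp add: gr_mult_def sp_def)
  also have "\<dots> = (\<Sum>x\<in>A. f x * h (inv x \<otimes> g))"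
    by (rule sum.mono_neutral_left) (use assms in \<open>auto simp: sp_def\<close>)
  also have "\<dots> = (\<Sum>x\<in>A. \<Sum>z\<in>B. if x \<otimes> z = g then f x * h z else 0)"
  proof (rule sum.cong[OF refl])
    fix x assume x: "x \<in> A"
    hence xc: "x \<in> carrier G" using assms by auto
    have "(\<Sum>z\<in>B. if x \<otimes> z = g then f x * h z else 0) = (\<Sum>z\<in>B. if z = inv x \<otimes> g then f x * h z else 0)"
      apply (rule sum.cong[OF refl]) using xc True assms(6)
      by (metis in_mono inv_solve_left m_closed inv_closed)
    also have "\<dots> = f x * h (inv x \<otimes> g)"
      using assms(8,4) by (cases "inv x \<otimes> g \<in> B") (auto simp: sp_def)
    finally show "f x * h (inv x \<otimes> g) = (\<Sum>z\<in>B. if x \<otimes> z = g then f x * h z else 0)" by simp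
  qed
  finally show ?thesis .
qed

lemma conv0:
  fixes f h :: "'a \<Rightarrow> 'k::field"
  assumes "f \<in> gr_carrier G" "h \<in> gr_carrier G"
  shows "gr_mult G f h g = (\<Sum>x\<in>sp f. \<Sum>z\<in>sp h. if x \<otimes> z = g then f x * h z else 0)"
  using assms grc_sp by (intro conv) auto

lemma sp_mult:
  fixes f h :: "'a \<Rightarrow> 'k::field"
  assumes "f \<in> gr_carrier G" "h \<in> gr_carrier G"
  shows "sp (gr_mult G f h) \<subseteq> (\<lambda>(x,z). x \<otimes> z) ` (sp f \<times> sp h)"
proof
  fix g assume g: "g \<in> sp (gr_mult G f h)"
  show "g \<in> (\<lambda>(x,z). x \<otimes> z) ` (sp f \<times> sp h)"
  proof (rule ccontr)
    assume n: "g \<notin> (\<lambda>(x,z). x \<otimes> z) ` (sp f \<times> sp h)"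
    have "gr_mult G f h g = 0" unfolding conv0[OF assms]
      by (rule sum.neutral, rule ballI, rule sum.neutral) (use n in force)
    thus False using g by (simp add: sp_def)
  qed
qed

lemma mult_closed:
  fixes f h :: "'a \<Rightarrow> 'k::field"
  assumes "f \<in> gr_carrier G" "h \<in> gr_carrier G"
  shows "gr_mult G f h \<in> gr_carrier G"
proof (rule grcI)
  show "finite (sp (gr_mult G f h))"
    by (rule finite_subset[OF sp_mult[OF assms]]) (use grc_sp[OF assms(1)] grc_sp[OF assms(2)] in auto)
qed (simp add: gr_mult_def)

lemma mult_assoc:
  fixes f h k :: "'a \<Rightarrow> 'k::field"
  assumes f: "f \<in> gr_carrier G" and h: "h \<in> gr_carrier G" and k: "k \<in> gr_carrier G"
  shows "gr_mult G (gr_mult G f h) k = gr_mult G f (gr_mult G h k)"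
proof
  fix g
  define A where "A = sp f"
  define B where "B = sp h"
  define D where "D = sp k"
  define C where "C = (\<lambda>(x,z). x \<otimes> z) ` (A \<times> B)"
  define E where "E = (\<lambda>(x,z). x \<otimes> z) ` (B \<times> D)"
  have fA: "finite A" "A \<subseteq> carrier G" using grc_sp[OF f] A_def by auto
  have fB: "finite B" "B \<subseteq> carrier G" using grc_sp[OF h] B_def by auto
  have fD: "finite D" "D \<subseteq> carrier G" using grc_sp[OF k] D_def by auto
  have fC: "finite C" "C \<subseteq> carrier G" using fA fB C_def by auto
  have fE: "finite E" "E \<subseteq> carrier G" using fD fB E_def by auto
  have fh: "gr_mult G f h \<in> gr_carrier G" "gr_mult G h k \<in> gr_carrier G" using mult_closed f h k by auto
  have L: "gr_mult G (gr_mult G f h) k g =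
     (\<Sum>y\<in>C. \<Sum>w\<in>D. if y \<otimes> w = g then gr_mult G f h y * k w else 0)"
    by (rule conv) (use fC fD fh k sp_mult[OF f h] in \<open>auto simp: C_def A_def B_def D_def\<close>)
  also have "\<dots> = (\<Sum>y\<in>C. \<Sum>w\<in>D. \<Sum>x\<in>A. \<Sum>z\<in>B. if x \<otimes> z = y \<and> y \<otimes> w = g then f x * h z * k w else 0)"
    unfolding conv0[OF f h] A_def[symmetric] B_def[symmetric]
    by (intro sum.cong[OF refl] helper1)
  also have "\<dots> = (\<Sum>x\<in>A. \<Sum>z\<in>B. \<Sum>w\<in>D. \<Sum>y\<in>C. if x \<otimes> z = y \<and> y \<otimes> w = g then f x * h z * k w else 0)"
    by (rule swap4)
  also have "\<dots> = (\<Sum>x\<in>A. \<Sum>z\<in>B. \<Sum>w\<in>D. if x \<otimes> z \<otimes> w = g then f x * h z * k w else 0)"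
  proof (intro sum.cong[OF refl])
    fix x z w assume xzw: "x \<in> A" "z \<in> B" "w \<in> D"
    hence "x \<otimes> z \<in> C" by (auto simp: C_def)
    thus "(\<Sum>y\<in>C. if x \<otimes> z = y \<and> y \<otimes> w = g then f x * h z * k w else 0) =
      (if x \<otimes> z \<otimes> w = g then f x * h z * k w else 0)"
    proof -
      have "(\<Sum>y\<in>C. if x \<otimes> z = y \<and> y \<otimes> w = g then f x * h z * k w else 0) =
        (\<Sum>y\<in>C. if x \<otimes> z = y then (if x \<otimes> z \<otimes> w = g then f x * h z * k w else 0) else 0)"
        by (rule sum.cong) auto
      also have "\<dots> = (if x \<otimes> z \<otimes> w = g then f x * h z * k w else 0)"
        using fC \<open>x \<otimes> z \<in> C\<close> by (simp only: sum.delta') simp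
      finally show ?thesis .
    qed
  qed
  also have "\<dots> = (\<Sum>x\<in>A. \<Sum>z\<in>B. \<Sum>w\<in>D. \<Sum>u\<in>E. if z \<otimes> w = u \<and> x \<otimes> u = g then f x * h z * k w else 0)"
  proof (intro sum.cong[OF refl])
    fix x z w assume xzw: "x \<in> A" "z \<in> B" "w \<in> D"
    hence "z \<otimes> w \<in> E" by (auto simp: E_def)
    moreover have "x \<otimes> z \<otimes> w = x \<otimes> (z \<otimes> w)" by (rule m_assoc) (use xzw fA fB fD in auto)
    ultimately show "(if x \<otimes> z \<otimes> w = g then f x * h z * k w else 0) =
      (\<Sum>u\<in>E. if z \<otimes> w = u \<and> x \<otimes> u = g then f x * h z * k w else 0)"
    proof -
      have "(\<Sum>u\<in>E. if z \<otimes> w = u \<and> x \<otimes> u = g then f x * h z * k w else 0) =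
        (\<Sum>u\<in>E. if z \<otimes> w = u then (if x \<otimes> (z \<otimes> w) = g then f x * h z * k w else 0) else 0)"
        by (rule sum.cong) auto
      also have "\<dots> = (if x \<otimes> (z \<otimes> w) = g then f x * h z * k w else 0)"
        using fE \<open>z \<otimes> w \<in> E\<close> by (simp only: sum.delta') simp
      finally show ?thesis using \<open>x \<otimes> z \<otimes> w = x \<otimes> (z \<otimes> w)\<close> by simp
    qed
  qed
  also have "\<dots> = (\<Sum>x\<in>A. \<Sum>u\<in>E. \<Sum>z\<in>B. \<Sum>w\<in>D. if z \<otimes> w = u \<and> x \<otimes> u = g then f x * h z * k w else 0)"
    by (rule sum.cong[OF refl], rule swap3)
  also have "\<dots> = (\<Sum>x\<in>A. \<Sum>u\<in>E. \<Sum>z\<in>B. \<Sum>w\<in>D. if z \<otimes> w = u \<and> x \<otimes> u = g then f x * (h z * k w) else 0)"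
    by (simp only: mult.assoc)
  also have "\<dots> = (\<Sum>x\<in>A. \<Sum>u\<in>E. if x \<otimes> u = g then f x * gr_mult G h k u else 0)"
    unfolding conv0[OF h k] B_def[symmetric] D_def[symmetric]
    by (intro sum.cong[OF refl] helper2[symmetric])
  also have "\<dots> = gr_mult G f (gr_mult G h k) g"
    by (rule conv[symmetric]) (use fA fE fh f sp_mult[OF h k] in \<open>auto simp: E_def A_def B_def D_def\<close>)
  finally show "gr_mult G (gr_mult G f h) k g = gr_mult G f (gr_mult G h k) g" .
qed


lemma sp_add: "sp (\<lambda>g. f g + h g) \<subseteq> sp f \<union> sp (h::'a \<Rightarrow> 'k::field)"
  by (auto simp: sp_def)

lemma add_closed: "f \<in> gr_carrier G \<Longrightarrow> h \<in> gr_carrier G \<Longrightarrow> (\<lambda>g. f g + h g) \<in> gr_carrier G"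
  apply (rule grcI)
   apply (rule finite_subset[OF sp_add]) using grc_sp apply blast
  by (auto simp: gr_carrier_def)

lemma distr_l:
  fixes f f' h :: "'a \<Rightarrow> 'k::field"
  assumes f: "f \<in> gr_carrier G" and f': "f' \<in> gr_carrier G" and h: "h \<in> gr_carrier G"
  shows "gr_mult G (\<lambda>g. f g + f' g) h = (\<lambda>g. gr_mult G f h g + gr_mult G f' h g)"
proof
  fix g
  define A where "A = sp f \<union> sp f'"
  have fA: "finite A" "A \<subseteq> carrier G" using grc_sp[OF f] grc_sp[OF f'] A_def by auto
  have fB: "finite (sp h)" "sp h \<subseteq> carrier G" using grc_sp[OF h] by auto
  have c: "(\<lambda>g. f g + f' g) \<in> gr_carrier G" using add_closed f f' by blast
  have e1: "gr_mult G (\<lambda>g. f g + f' g) h g = (\<Sum>x\<in>A. \<Sum>z\<in>sp h. if x \<otimes> z = g then (f x + f' x) * h z else 0)"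
    by (rule conv[OF c h fA(1) fB(1) fA(2) fB(2)]) (use sp_add A_def in auto)
  have e2: "gr_mult G f h g = (\<Sum>x\<in>A. \<Sum>z\<in>sp h. if x \<otimes> z = g then f x * h z else 0)"
    by (rule conv[OF f h fA(1) fB(1) fA(2) fB(2)]) (use A_def in auto)
  have e3: "gr_mult G f' h g = (\<Sum>x\<in>A. \<Sum>z\<in>sp h. if x \<otimes> z = g then f' x * h z else 0)"
    by (rule conv[OF f' h fA(1) fB(1) fA(2) fB(2)]) (use A_def in auto)
  show "gr_mult G (\<lambda>g. f g + f' g) h g = gr_mult G f h g + gr_mult G f' h g"
    unfolding e1 e2 e3 sum.distrib[symmetric] by (auto intro!: sum.cong simp: distrib_right)
qed

lemma distr_r:
  fixes f h h' :: "'a \<Rightarrow> 'k::field"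
  assumes f: "f \<in> gr_carrier G" and h: "h \<in> gr_carrier G" and h': "h' \<in> gr_carrier G"
  shows "gr_mult G f (\<lambda>g. h g + h' g) = (\<lambda>g. gr_mult G f h g + gr_mult G f h' g)"
proof
  fix g
  define B where "B = sp h \<union> sp h'"
  have fB: "finite B" "B \<subseteq> carrier G" using grc_sp[OF h] grc_sp[OF h'] B_def by auto
  have fA: "finite (sp f)" "sp f \<subseteq> carrier G" using grc_sp[OF f] by auto
  have c: "(\<lambda>g. h g + h' g) \<in> gr_carrier G" using add_closed h h' by blast
  have e1: "gr_mult G f (\<lambda>g. h g + h' g) g = (\<Sum>x\<in>sp f. \<Sum>z\<in>B. if x \<otimes> z = g then f x * (h z + h' z) else 0)"
    by (rule conv[OF f c fA(1) fB(1) fA(2) fB(2)]) (use sp_add B_def in auto)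
  have e2: "gr_mult G f h g = (\<Sum>x\<in>sp f. \<Sum>z\<in>B. if x \<otimes> z = g then f x * h z else 0)"
    by (rule conv[OF f h fA(1) fB(1) fA(2) fB(2)]) (use B_def in auto)
  have e3: "gr_mult G f h' g = (\<Sum>x\<in>sp f. \<Sum>z\<in>B. if x \<otimes> z = g then f x * h' z else 0)"
    by (rule conv[OF f h' fA(1) fB(1) fA(2) fB(2)]) (use B_def in auto)
  show "gr_mult G f (\<lambda>g. h g + h' g) g = gr_mult G f h g + gr_mult G f h' g"
    unfolding e1 e2 e3 sum.distrib[symmetric] by (auto intro!: sum.cong simp: distrib_left)
qed

lemma one_closed': "(gr_one G :: 'a \<Rightarrow> 'k::field) \<in> gr_carrier G"
  by (rule grcI) (auto simp: sp_def gr_one_def)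

lemma sp_one: "sp (gr_one G :: 'a \<Rightarrow> 'k::field) = {\<one>}"
  by (auto simp: sp_def gr_one_def)

lemma one_mult:
  fixes f :: "'a \<Rightarrow> 'k::field"
  assumes f: "f \<in> gr_carrier G"
  shows "gr_mult G (gr_one G) f = f"
proof
  fix g
  have "gr_mult G (gr_one G) f g = (\<Sum>x\<in>{\<one>}. \<Sum>z\<in>sp f. if x \<otimes> z = g then gr_one G x * f z else 0)"
    by (rule conv) (use f one_closed' grc_sp[OF f] sp_one in auto)
  also have "\<dots> = (\<Sum>z\<in>sp f. if z = g then f z else 0)"
    apply simp apply (rule sum.cong[OF refl]) using grc_sp[OF f] by (auto simp: gr_one_def)
  also have "\<dots> = f g" using grc_sp[OF f] by (simp add: sum.delta) (simp add: sp_def)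
  finally show "gr_mult G (gr_one G) f g = f g" .
qed

lemma mult_one:
  fixes f :: "'a \<Rightarrow> 'k::field"
  assumes f: "f \<in> gr_carrier G"
  shows "gr_mult G f (gr_one G) = f"
proof
  fix g
  have "gr_mult G f (gr_one G) g = (\<Sum>x\<in>sp f. \<Sum>z\<in>{\<one>}. if x \<otimes> z = g then f x * gr_one G z else 0)"
    by (rule conv) (use f one_closed' grc_sp[OF f] sp_one in auto)
  also have "\<dots> = (\<Sum>z\<in>sp f. if z = g then f z else 0)"
    apply simp apply (rule sum.cong[OF refl]) using grc_sp[OF f] by (auto simp: gr_one_def)
  also have "\<dots> = f g" using grc_sp[OF f] by (simp add: sum.delta) (simp add: sp_def)
  finally show "gr_mult G f (gr_one G) g = f g" .
qed

lemma group_ring_ring: "ring (group_ring G :: ('a \<Rightarrow> 'k::field) ring)"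
proof (rule ringI)
  show "abelian_group (group_ring G :: ('a \<Rightarrow> 'k::field) ring)"
  proof (rule abelian_groupI, simp_all add: group_ring_def add_closed)
    show "(\<lambda>g. 0::'k) \<in> gr_carrier G" by (rule grcI) (auto simp: sp_def)
    show "\<And>x y z. (\<lambda>g. x g + y g + z g) = (\<lambda>g. x g + (y g + (z g::'k)))" by (simp add: add.assoc)
    show "\<And>x y. (\<lambda>g. x g + y g) = (\<lambda>g. y g + (x g::'k))" by (simp add: add.commute)
    fix x :: "'a \<Rightarrow> 'k" assume x: "x \<in> gr_carrier G"
    show "\<exists>y\<in>gr_carrier G. (\<lambda>g. y g + x g) = (\<lambda>g. 0)"
    proof (intro bexI)
      show "(\<lambda>g. - x g) \<in> gr_carrier G" using x by (intro grcI) (auto simp: sp_def gr_carrier_def)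
    qed auto
  qed
  show "monoid (group_ring G :: ('a \<Rightarrow> 'k::field) ring)"
    by (rule monoidI) (simp_all add: group_ring_def mult_closed one_closed' mult_assoc one_mult mult_one)
qed (simp_all add: group_ring_def distr_l distr_r)


lemma sp_gstar: "f \<in> gr_carrier G \<Longrightarrow> sp (gstar G f) \<subseteq> (\<lambda>x. inv x) ` sp f"
  unfolding sp_def gstar_def by (auto intro!: image_eqI[where x="inv _"])

lemma gstar_closed: "f \<in> gr_carrier G \<Longrightarrow> gstar G (f :: 'a \<Rightarrow> 'k::field) \<in> gr_carrier G"
  apply (rule grcI) apply (rule finite_subset[OF sp_gstar]) using grc_sp by (auto simp: gstar_def)

lemma gstar_gstar: "f \<in> gr_carrier G \<Longrightarrow> gstar G (gstar G (f :: 'a \<Rightarrow> 'k::field)) = f"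
  unfolding gstar_def by (auto simp: gr_carrier_def)

lemma gstar_add: "gstar G (\<lambda>g. f g + h g) = (\<lambda>g. gstar G f g + gstar G (h :: 'a \<Rightarrow> 'k::field) g)"
  unfolding gstar_def by auto

lemma invprod_iff: "x \<in> carrier G \<Longrightarrow> z \<in> carrier G \<Longrightarrow> g \<in> carrier G \<Longrightarrow>
   (inv z \<otimes> inv x = g) = (x \<otimes> z = inv g)"
  by (metis inv_inv inv_mult_group m_closed inv_closed)

lemma gstar_mult:
  fixes f h :: "'a \<Rightarrow> 'k::field"
  assumes f: "f \<in> gr_carrier G" and h: "h \<in> gr_carrier G"
  shows "gstar G (gr_mult G f h) = gr_mult G (gstar G h) (gstar G f)"
proof
  fix g
  show "gstar G (gr_mult G f h) g = gr_mult G (gstar G h) (gstar G f) g"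
  proof (cases "g \<in> carrier G")
    case False
    thus ?thesis by (simp add: gstar_def gr_mult_def)
  next
    case True
    define A where "A = sp f"
    define B where "B = sp h"
    have fA: "finite A" "A \<subseteq> carrier G" using grc_sp[OF f] A_def by auto
    have fB: "finite B" "B \<subseteq> carrier G" using grc_sp[OF h] B_def by auto
    have ia: "inj_on (\<lambda>x. inv x) A" "inj_on (\<lambda>x. inv x) B" using fA fB inj_on_subset[OF inv_inj] by auto
    have "gr_mult G (gstar G h) (gstar G f) g =
       (\<Sum>z\<in>(\<lambda>x. inv x) ` B. \<Sum>x\<in>(\<lambda>x. inv x) ` A. if z \<otimes> x = g then gstar G h z * gstar G f x else 0)"
      by (rule conv) (use fA fB gstar_closed f h sp_gstar[OF f] sp_gstar[OF h] A_def B_def in auto)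
    also have "\<dots> = (\<Sum>z\<in>B. \<Sum>x\<in>A. if inv z \<otimes> inv x = g then h z * f x else 0)"
      apply (subst sum.reindex[OF ia(2)]) apply (simp add: o_def)
      apply (rule sum.cong[OF refl])
      apply (subst sum.reindex[OF ia(1)]) apply (simp add: o_def)
      apply (rule sum.cong[OF refl]) using fA fB by (auto simp: gstar_def subset_iff)
    also have "\<dots> = (\<Sum>x\<in>A. \<Sum>z\<in>B. if x \<otimes> z = inv g then f x * h z else 0)"
      apply (subst sum.swap) apply (rule sum.cong[OF refl]) apply (rule sum.cong[OF refl])
      using fA fB True by (auto simp: invprod_iff subset_iff mult.commute)
    also have "\<dots> = gstar G (gr_mult G f h) g"
      using True by (simp add: gstar_def conv0[OF f h] A_def B_def)
    finally show ?thesis by simp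
  qed
qed

lemma gstar_one: "gstar G (gr_one G) = (gr_one G :: 'a \<Rightarrow> 'k::field)"
  unfolding gstar_def gr_one_def by auto

lemma gel_closed: "g \<in> carrier G \<Longrightarrow> (gel G g :: 'a \<Rightarrow> 'k::field) \<in> gr_carrier G"
  by (rule grcI) (auto simp: sp_def gel_def)

lemma gel_mult:
  assumes "a \<in> carrier G" "b \<in> carrier G"
  shows "gr_mult G (gel G a) (gel G b) = (gel G (a \<otimes> b) :: 'a \<Rightarrow> 'k::field)"
proof
  fix g
  have "gr_mult G (gel G a) (gel G b) g = (\<Sum>x\<in>{a}. \<Sum>z\<in>{b}. if x \<otimes> z = g then (gel G a x :: 'k) * gel G b z else 0)"
    by (rule conv) (use assms gel_closed in \<open>auto simp: sp_def gel_def\<close>)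
  thus "gr_mult G (gel G a) (gel G b) g = (gel G (a \<otimes> b) g :: 'k)" by (auto simp: gel_def)
qed

lemma gel_one: "gel G \<one> = (gr_one G :: 'a \<Rightarrow> 'k::field)"
  unfolding gel_def gr_one_def by auto

lemma gstar_gel: "g \<in> carrier G \<Longrightarrow> gstar G (gel G g) = (gel G (inv g) :: 'a \<Rightarrow> 'k::field)"
  unfolding gstar_def gel_def by fastforce

end


locale absR = ring R for R (structure) +
  fixes st :: "'a \<Rightarrow> 'a" and h :: 'a
  assumes st_closed[simp]: "x \<in> carrier R \<Longrightarrow> st x \<in> carrier R"
    and st_add: "x \<in> carrier R \<Longrightarrow> y \<in> carrier R \<Longrightarrow> st (x \<oplus> y) = st x \<oplus> st y"
    and st_mult: "x \<in> carrier R \<Longrightarrow> y \<in> carrier R \<Longrightarrow> st (x \<otimes> y) = st y \<otimes> st x"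
    and st_st[simp]: "x \<in> carrier R \<Longrightarrow> st (st x) = x"
    and cent: "x \<in> carrier R \<Longrightarrow> y \<in> carrier R \<Longrightarrow> (x \<oplus> st x) \<otimes> y = y \<otimes> (x \<oplus> st x)"
    and h_closed[simp]: "h \<in> carrier R"
    and hh: "h \<oplus> h = \<one>"
    and st_h: "st h = h"
    and h_cent: "y \<in> carrier R \<Longrightarrow> h \<otimes> y = y \<otimes> h"
begin

definition bar where "bar x = h \<otimes> (x \<oplus> st x)"

lemma bar_closed[simp]: "x \<in> carrier R \<Longrightarrow> bar x \<in> carrier R"
  by (simp add: bar_def)

lemma st_zero[simp]: "st \<zero> = \<zero>"
proof -
  have "st \<zero> \<oplus> st \<zero> = st \<zero> \<oplus> \<zero>" using st_add[of \<zero> \<zero>] by simp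
  thus ?thesis by (metis add.l_cancel_one' zero_closed st_closed r_zero)
qed

lemma st_neg: "x \<in> carrier R \<Longrightarrow> st (\<ominus> x) = \<ominus> st x"
proof -
  assume x: "x \<in> carrier R"
  have "st (\<ominus> x) \<oplus> st x = \<zero>" using st_add[of "\<ominus> x" x] x by (simp add: l_neg)
  thus ?thesis using x by (simp add: minus_equality)
qed

lemma st_minus: "x \<in> carrier R \<Longrightarrow> y \<in> carrier R \<Longrightarrow> st (x \<ominus> y) = st x \<ominus> st y"
  by (simp add: minus_eq st_add st_neg)

lemma sym_central:
  assumes x: "x \<in> carrier R" "st x = x" and y: "y \<in> carrier R"
  shows "x \<otimes> y = y \<otimes> x"
proof -
  have e: "x = h \<otimes> (x \<oplus> st x)"
    using x by (simp add: r_distr l_distr[symmetric] hh)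
  have "x \<otimes> y = h \<otimes> ((x \<oplus> st x) \<otimes> y)" by (subst e) (simp add: x y m_assoc)
  also have "\<dots> = h \<otimes> (y \<otimes> (x \<oplus> st x))" using cent[OF x(1) y] by simp
  also have "\<dots> = y \<otimes> (h \<otimes> (x \<oplus> st x))"
    using x y by (simp add: m_assoc[symmetric] h_cent[of y])
  finally show ?thesis using e by simp
qed

lemma bar_sym: "x \<in> carrier R \<Longrightarrow> st (bar x) = bar x"
  unfolding bar_def
  by (simp add: st_mult st_add st_h h_cent a_comm)

lemma bar_add: "x \<in> carrier R \<Longrightarrow> y \<in> carrier R \<Longrightarrow> bar (x \<oplus> y) = bar x \<oplus> bar y"
  unfolding bar_def by (simp add: st_add r_distr[symmetric] a_ac)

lemma bar_neg: "x \<in> carrier R \<Longrightarrow> bar (\<ominus> x) = \<ominus> bar x"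
proof -
  assume x: "x \<in> carrier R"
  have "h \<otimes> (\<ominus> x \<oplus> st (\<ominus> x)) = h \<otimes> (\<ominus> (x \<oplus> st x))" using x by (simp add: st_neg minus_add)
  also have "\<dots> = \<ominus> (h \<otimes> (x \<oplus> st x))" using x by (simp add: r_minus)
  finally show ?thesis by (simp add: bar_def)
qed

lemma bar_minus: "x \<in> carrier R \<Longrightarrow> y \<in> carrier R \<Longrightarrow> bar (x \<ominus> y) = bar x \<ominus> bar y"
  by (simp add: minus_eq bar_add bar_neg)

lemma bar_st: "x \<in> carrier R \<Longrightarrow> bar (st x) = bar x"
  unfolding bar_def by (simp add: a_comm)

lemma bar_symmul:
  assumes s: "s \<in> carrier R" "st s = s" and x: "x \<in> carrier R"
  shows "bar (s \<otimes> x) = s \<otimes> bar x"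
proof -
  have "bar (s \<otimes> x) = h \<otimes> (s \<otimes> x \<oplus> st x \<otimes> s)" unfolding bar_def using s x by (simp add: st_mult)
  also have "\<dots> = h \<otimes> (s \<otimes> x \<oplus> s \<otimes> st x)" using sym_central[OF s, of "st x"] x by simp
  also have "\<dots> = h \<otimes> (s \<otimes> (x \<oplus> st x))" using s x by (simp add: r_distr)
  also have "\<dots> = s \<otimes> (h \<otimes> (x \<oplus> st x))" using s x h_cent[of s] by (simp add: m_assoc[symmetric])
  finally show ?thesis by (simp add: bar_def)
qed

lemma bar_anti:
  assumes w: "w \<in> carrier R" "st w = \<ominus> w"
  shows "bar w = \<zero>"
  unfolding bar_def using w by (simp add: r_neg)

lemma bar_trace:
  assumes x: "x \<in> carrier R" and y: "y \<in> carrier R"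
  shows "bar (x \<otimes> y) = bar (y \<otimes> x)"
proof -
  have 1: "x \<otimes> y \<oplus> st x \<otimes> y = y \<otimes> x \<oplus> y \<otimes> st x"
    using cent[OF x y] x y by (simp add: l_distr r_distr)
  have 4: "y \<otimes> st x \<oplus> st y \<otimes> st x = st x \<otimes> y \<oplus> st x \<otimes> st y"
    using cent[OF y, of "st x"] x y by (simp add: l_distr r_distr)
  have "(x \<otimes> y \<oplus> st y \<otimes> st x) \<oplus> (st x \<otimes> y \<oplus> y \<otimes> st x)
      = (x \<otimes> y \<oplus> st x \<otimes> y) \<oplus> (y \<otimes> st x \<oplus> st y \<otimes> st x)"
    using x y by (simp add: a_ac)
  also have "\<dots> = (y \<otimes> x \<oplus> y \<otimes> st x) \<oplus> (st x \<otimes> y \<oplus> st x \<otimes> st y)" by (simp add: 1 4)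
  also have "\<dots> = (y \<otimes> x \<oplus> st x \<otimes> st y) \<oplus> (st x \<otimes> y \<oplus> y \<otimes> st x)"
    using x y by (simp add: a_ac)
  finally have "x \<otimes> y \<oplus> st y \<otimes> st x = y \<otimes> x \<oplus> st x \<otimes> st y"
    using x y by (simp add: add.right_cancel)
  thus ?thesis unfolding bar_def using x y by (simp add: st_mult)
qed

lemma st_one: "st \<one> = \<one>"
proof -
  have "st (st \<one> \<otimes> \<one>) = st \<one> \<otimes> st (st \<one>)" by (rule st_mult) simp_all
  thus ?thesis by simp
qed

lemma antisym_repr:
  assumes w: "w \<in> carrier R" "st w = \<ominus> w"
  shows "(h \<otimes> w) \<ominus> st (h \<otimes> w) = w"
proof -
  have "st (h \<otimes> w) = \<ominus> (h \<otimes> w)" using w by (simp add: st_mult st_h l_minus h_cent)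
  hence "(h \<otimes> w) \<ominus> st (h \<otimes> w) = h \<otimes> w \<oplus> h \<otimes> w" using w by (simp add: minus_eq)
  also have "\<dots> = w" using w by (simp add: l_distr[symmetric] hh)
  finally show ?thesis .
qed

lemma minus_st_anti: "x \<in> carrier R \<Longrightarrow> st (x \<ominus> st x) = \<ominus> (x \<ominus> st x)"
  by (simp add: st_add st_neg minus_eq minus_add a_comm)

lemma sym_anti_decomp:
  assumes u: "u \<in> carrier R"
  shows "u = bar u \<oplus> h \<otimes> (u \<ominus> st u)" and "st (h \<otimes> (u \<ominus> st u)) = \<ominus> (h \<otimes> (u \<ominus> st u))"
proof -
  have "bar u \<oplus> h \<otimes> (u \<ominus> st u) = h \<otimes> ((u \<oplus> st u) \<oplus> (u \<ominus> st u))"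
    unfolding bar_def using u by (simp add: r_distr)
  also have "(u \<oplus> st u) \<oplus> (u \<ominus> st u) = u \<oplus> u" using u by (simp add: minus_eq a_ac r_neg)
  also have "h \<otimes> (u \<oplus> u) = u" using u by (simp add: r_distr l_distr[symmetric] hh)
  finally show "u = bar u \<oplus> h \<otimes> (u \<ominus> st u)" by simp
  show "st (h \<otimes> (u \<ominus> st u)) = \<ominus> (h \<otimes> (u \<ominus> st u))"
    using u minus_st_anti[OF u] by (simp add: st_mult st_h l_minus h_cent)
qed

end

locale absJ = absR R st h for R (structure) and st h +
  fixes G :: "('g, 'm) monoid_scheme" and e :: "'g \<Rightarrow> 'a" and J
  assumes grpG: "group G"
    and e_closed[simp]: "g \<in> carrier G \<Longrightarrow> e g \<in> carrier R"
    and e_one: "e \<one>\<^bsub>G\<^esub> = \<one>"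
    and e_mult: "a \<in> carrier G \<Longrightarrow> b \<in> carrier G \<Longrightarrow> e (a \<otimes>\<^bsub>G\<^esub> b) = e a \<otimes> e b"
    and e_inv: "a \<in> carrier G \<Longrightarrow> st (e a) = e (inv\<^bsub>G\<^esub> a)"
    and idl: "ideal J (R\<lparr>carrier := {x \<in> carrier R. st x = x}\<rparr>)"
begin

lemma J_sub: "a \<in> J \<Longrightarrow> a \<in> carrier R \<and> st a = a"
  using additive_subgroup.a_subset[OF ideal.axioms(1)[OF idl]] by auto

lemma J_add: "a \<in> J \<Longrightarrow> b \<in> J \<Longrightarrow> a \<oplus> b \<in> J"
  using additive_subgroup.a_closed[OF ideal.axioms(1)[OF idl]] by auto

lemma J_zero: "\<zero> \<in> J"
  using additive_subgroup.zero_closed[OF ideal.axioms(1)[OF idl]] by auto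

lemma J_smul: "s \<in> carrier R \<Longrightarrow> st s = s \<Longrightarrow> a \<in> J \<Longrightarrow> s \<otimes> a \<in> J"
  using ideal.I_l_closed[OF idl] by auto

lemma J_neg: "a \<in> J \<Longrightarrow> \<ominus> a \<in> J"
proof -
  assume a: "a \<in> J"
  have "(\<ominus> \<one>) \<otimes> a \<in> J" by (rule J_smul) (use a in \<open>auto simp: st_neg st_one\<close>)
  thus ?thesis using J_sub[OF a] by (simp add: l_minus)
qed

definition PP where "PP k \<longleftrightarrow> (\<forall>w. w \<in> carrier R \<and> st w = \<ominus> w \<longrightarrow> bar (w \<otimes> e k) \<in> J)"

lemma PP_one: "PP \<one>\<^bsub>G\<^esub>"
  unfolding PP_def by (auto simp: e_one bar_anti J_zero)

lemma PP_inv: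
  assumes k: "k \<in> carrier G" and P: "PP k"
  shows "PP (inv\<^bsub>G\<^esub> k)"
  unfolding PP_def
proof (intro allI impI)
  fix w assume w: "w \<in> carrier R \<and> st w = \<ominus> w"
  have "bar (w \<otimes> e (inv\<^bsub>G\<^esub> k)) = bar (w \<otimes> st (e k))" using k by (simp add: e_inv)
  also have "\<dots> = bar (st (e k \<otimes> st w))" using k w[THEN conjunct1] by (simp add: st_mult)
  also have "\<dots> = bar (e k \<otimes> st w)" using k w[THEN conjunct1] by (simp add: bar_st)
  also have "\<dots> = bar (st w \<otimes> e k)" using k w[THEN conjunct1] by (simp add: bar_trace)
  also have "\<dots> = \<ominus> bar (w \<otimes> e k)" using k w by (simp add: l_minus bar_neg)
  finally show "bar (w \<otimes> e (inv\<^bsub>G\<^esub> k)) \<in> J" using P w unfolding PP_def by (simp add: J_neg)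
qed

lemma PP_mult:
  assumes a: "a \<in> carrier G" and b: "b \<in> carrier G" and Pa: "PP a" and Pb: "PP b"
  shows "PP (a \<otimes>\<^bsub>G\<^esub> b)"
  unfolding PP_def
proof (intro allI impI)
  fix w assume w: "w \<in> carrier R \<and> st w = \<ominus> w"
  define u where "u = w \<otimes> e a"
  have u: "u \<in> carrier R" using w a u_def by simp
  define w2 where "w2 = h \<otimes> (u \<ominus> st u)"
  have w2: "w2 \<in> carrier R" "st w2 = \<ominus> w2" using sym_anti_decomp[OF u] u w2_def by auto
  have "bar (w \<otimes> e (a \<otimes>\<^bsub>G\<^esub> b)) = bar (u \<otimes> e b)" using a b w by (simp add: e_mult u_def m_assoc)
  also have "\<dots> = bar ((bar u \<oplus> w2) \<otimes> e b)" using sym_anti_decomp(1)[OF u] w2_def by simp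
  also have "\<dots> = bar u \<otimes> bar (e b) \<oplus> bar (w2 \<otimes> e b)"
    using u w2 b by (simp add: l_distr bar_add bar_symmul bar_sym)
  finally have eq: "bar (w \<otimes> e (a \<otimes>\<^bsub>G\<^esub> b)) = bar (e b) \<otimes> bar u \<oplus> bar (w2 \<otimes> e b)"
    using sym_central[of "bar u" "bar (e b)"] u b by (simp add: bar_sym)
  have "bar u \<in> J" using Pa w unfolding PP_def u_def by blast
  hence "bar (e b) \<otimes> bar u \<in> J" using b by (simp add: J_smul bar_sym)
  moreover have "bar (w2 \<otimes> e b) \<in> J" using Pb w2 unfolding PP_def by blast
  ultimately show "bar (w \<otimes> e (a \<otimes>\<^bsub>G\<^esub> b)) \<in> J" using eq J_add by simp
qed

lemma phi_eq:
  assumes Z: "Z \<in> carrier R" and l: "l \<in> carrier G"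
  shows "bar (Z \<otimes> e l) \<ominus> bar (Z \<otimes> e (inv\<^bsub>G\<^esub> l)) = bar ((Z \<ominus> st Z) \<otimes> e l)"
proof -
  have "bar (Z \<otimes> e (inv\<^bsub>G\<^esub> l)) = bar (Z \<otimes> st (e l))" using l by (simp add: e_inv)
  also have "\<dots> = bar (st (e l \<otimes> st Z))" using l Z by (simp add: st_mult)
  also have "\<dots> = bar (e l \<otimes> st Z)" using l Z by (simp add: bar_st)
  also have "\<dots> = bar (st Z \<otimes> e l)" using l Z by (simp add: bar_trace)
  finally show ?thesis using Z l by (simp add: minus_eq l_distr bar_add bar_neg l_minus)
qed

lemma PP_conj:
  assumes g: "g \<in> carrier G" and l: "l \<in> carrier G"
    and gen: "\<And>Z. Z \<in> carrier R \<Longrightarrow> bar (Z \<otimes> e l) \<ominus> bar (Z \<otimes> e (inv\<^bsub>G\<^esub> l)) \<in> J"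
  shows "PP (g \<otimes>\<^bsub>G\<^esub> l \<otimes>\<^bsub>G\<^esub> inv\<^bsub>G\<^esub> g)"
  unfolding PP_def
proof (intro allI impI)
  fix w assume w: "w \<in> carrier R \<and> st w = \<ominus> w"
  have ig: "inv\<^bsub>G\<^esub> g \<in> carrier G" using g grpG by (simp add: group.inv_closed)
  have iig: "inv\<^bsub>G\<^esub> (inv\<^bsub>G\<^esub> g) = g" using g grpG by (simp add: group.inv_inv)
  have gl: "g \<otimes>\<^bsub>G\<^esub> l \<in> carrier G" using g l grpG by (simp add: group.subgroup_self subgroup.m_closed)
  define w' where "w' = e (inv\<^bsub>G\<^esub> g) \<otimes> w \<otimes> e g"
  have w'c: "w' \<in> carrier R" using w g ig w'_def by simp
  have w'a: "st w' = \<ominus> w'"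
    using w g ig unfolding w'_def by (simp add: st_mult e_inv iig l_minus r_minus m_assoc)
  have "bar (w \<otimes> e (g \<otimes>\<^bsub>G\<^esub> l \<otimes>\<^bsub>G\<^esub> inv\<^bsub>G\<^esub> g)) = bar ((w \<otimes> e g \<otimes> e l) \<otimes> e (inv\<^bsub>G\<^esub> g))"
    using g l ig gl w by (simp add: e_mult m_assoc)
  also have "\<dots> = bar (e (inv\<^bsub>G\<^esub> g) \<otimes> (w \<otimes> e g \<otimes> e l))"
    using g l ig w by (simp add: bar_trace)
  also have "\<dots> = bar (w' \<otimes> e l)" using g l ig w by (simp add: w'_def m_assoc)
  also have "\<dots> = bar (((h \<otimes> w') \<ominus> st (h \<otimes> w')) \<otimes> e l)" using antisym_repr[OF w'c w'a] by simp
  also have "\<dots> = bar ((h \<otimes> w') \<otimes> e l) \<ominus> bar ((h \<otimes> w') \<otimes> e (inv\<^bsub>G\<^esub> l))"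
    using phi_eq[of "h \<otimes> w'" l] w'c l by simp
  finally show "bar (w \<otimes> e (g \<otimes>\<^bsub>G\<^esub> l \<otimes>\<^bsub>G\<^esub> inv\<^bsub>G\<^esub> g)) \<in> J" using gen[of "h \<otimes> w'"] w'c by simp
qed


lemma PP_gen:
  assumes L: "L \<subseteq> carrier G"
    and gen: "\<And>l Z. l \<in> L \<Longrightarrow> Z \<in> carrier R \<Longrightarrow> bar (Z \<otimes> e l) \<ominus> bar (Z \<otimes> e (inv\<^bsub>G\<^esub> l)) \<in> J"
    and k: "k \<in> generate G (\<Union>g\<in>carrier G. (\<lambda>l. g \<otimes>\<^bsub>G\<^esub> l \<otimes>\<^bsub>G\<^esub> inv\<^bsub>G\<^esub> g) ` L)"
  shows "k \<in> carrier G \<and> PP k"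
  using k
proof induction
  case one
  then show ?case using PP_one grpG by (simp add: group.is_monoid monoid.one_closed)
next
  case (incl x)
  then obtain g l where gl: "g \<in> carrier G" "l \<in> L" "x = g \<otimes>\<^bsub>G\<^esub> l \<otimes>\<^bsub>G\<^esub> inv\<^bsub>G\<^esub> g" by auto
  have "x \<in> carrier G" using gl L grpG by (auto intro!: group.subgroup_self subgroup.m_closed group.inv_closed)
  moreover have "PP x" using gl L gen by (auto intro!: PP_conj)
  ultimately show ?case by simp
next
  case (inv x)
  then obtain g l where gl: "g \<in> carrier G" "l \<in> L" "x = g \<otimes>\<^bsub>G\<^esub> l \<otimes>\<^bsub>G\<^esub> inv\<^bsub>G\<^esub> g" by auto
  have xc: "x \<in> carrier G" using gl L grpG by (auto intro!: group.subgroup_self subgroup.m_closed group.inv_closed)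
  moreover have "PP x" using gl L gen by (auto intro!: PP_conj)
  ultimately show ?case using PP_inv grpG by (simp add: group.inv_closed)
next
  case (eng a b)
  then show ?case using PP_mult grpG by (auto intro!: group.subgroup_self subgroup.m_closed)
qed

lemma main_abs:
  assumes L: "L \<subseteq> carrier G"
    and gen: "\<And>l Z. l \<in> L \<Longrightarrow> Z \<in> carrier R \<Longrightarrow> bar (Z \<otimes> e l) \<ominus> bar (Z \<otimes> e (inv\<^bsub>G\<^esub> l)) \<in> J"
    and k: "k \<in> generate G (\<Union>g\<in>carrier G. (\<lambda>l. g \<otimes>\<^bsub>G\<^esub> l \<otimes>\<^bsub>G\<^esub> inv\<^bsub>G\<^esub> g) ` L)"
    and Z: "Z \<in> carrier R"
  shows "bar (Z \<otimes> e k) \<ominus> bar (Z \<otimes> e (inv\<^bsub>G\<^esub> k)) \<in> J"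
proof -
  have P: "k \<in> carrier G \<and> PP k" by (rule PP_gen[OF L gen k])
  have "bar (Z \<otimes> e k) \<ominus> bar (Z \<otimes> e (inv\<^bsub>G\<^esub> k)) = bar ((Z \<ominus> st Z) \<otimes> e k)"
    using phi_eq Z P by simp
  moreover have "bar ((Z \<ominus> st Z) \<otimes> e k) \<in> J" using P Z minus_st_anti[OF Z] unfolding PP_def by simp
  ultimately show ?thesis by simp
qed

end


context group begin

lemma R0_simps:
  "carrier (group_ring G :: ('a \<Rightarrow> 'k::field) ring) = gr_carrier G"
  "x \<otimes>\<^bsub>group_ring G :: ('a \<Rightarrow> 'k::field) ring\<^esub> y = gr_mult G x y"
  "\<one>\<^bsub>group_ring G :: ('a \<Rightarrow> 'k::field) ring\<^esub> = gr_one G"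
  "x \<oplus>\<^bsub>group_ring G :: ('a \<Rightarrow> 'k::field) ring\<^esub> y = (\<lambda>g. x g + y g)"
  "\<zero>\<^bsub>group_ring G :: ('a \<Rightarrow> 'k::field) ring\<^esub> = (\<lambda>g. 0)"
  by (simp_all add: group_ring_def)

lemma R0_neg:
  assumes x: "x \<in> gr_carrier G"
  shows "\<ominus>\<^bsub>group_ring G :: ('a \<Rightarrow> 'k::field) ring\<^esub> x = (\<lambda>g. - x g)"
proof -
  interpret R0: ring "group_ring G :: ('a \<Rightarrow> 'k::field) ring" by (rule group_ring_ring)
  have c: "(\<lambda>g. - x g) \<in> gr_carrier G" using x by (intro grcI) (auto simp: sp_def gr_carrier_def grc_sp)
  show ?thesis
    by (rule R0.add.inv_equality) (use x c in \<open>simp_all add: R0_simps\<close>)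
qed

lemma gstar_neg: "x \<in> gr_carrier G \<Longrightarrow>
  gstar G (\<ominus>\<^bsub>group_ring G :: ('a \<Rightarrow> 'k::field) ring\<^esub> x) = \<ominus>\<^bsub>group_ring G :: ('a \<Rightarrow> 'k::field) ring\<^esub> (gstar G x)"
  by (simp add: R0_neg gstar_closed) (auto simp: gstar_def)

lemma gstar_minus: "x \<in> gr_carrier G \<Longrightarrow> y \<in> gr_carrier G \<Longrightarrow>
  gstar G (x \<ominus>\<^bsub>group_ring G :: ('a \<Rightarrow> 'k::field) ring\<^esub> y) = gstar G x \<ominus>\<^bsub>group_ring G :: ('a \<Rightarrow> 'k::field) ring\<^esub> (gstar G y)"
  by (simp add: a_minus_def gstar_neg R0_simps gstar_add)

lemma gen_sub: "{a \<otimes>\<^bsub>group_ring G\<^esub> b \<ominus>\<^bsub>group_ring G\<^esub> b \<otimes>\<^bsub>group_ring G\<^esub> a | a b.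
        a \<in> carrier (group_ring G) \<and> b \<in> carrier (group_ring G) \<and> gstar G b = b} \<subseteq> carrier (group_ring G :: ('a \<Rightarrow> 'k::field) ring)"
proof -
  interpret R0: ring "group_ring G :: ('a \<Rightarrow> 'k::field) ring" by (rule group_ring_ring)
  show ?thesis by auto
qed

lemma comm_ideal_ideal: "ideal (comm_ideal G) (group_ring G :: ('a \<Rightarrow> 'k::field) ring)"
proof -
  interpret R0: ring "group_ring G :: ('a \<Rightarrow> 'k::field) ring" by (rule group_ring_ring)
  show ?thesis unfolding comm_ideal_def by (rule R0.genideal_ideal[OF gen_sub])
qed

lemma gstar_I:
  assumes x: "(x :: 'a \<Rightarrow> 'k::field) \<in> comm_ideal G"
  shows "gstar G x \<in> comm_ideal G"
proof -
  interpret R0: ring "group_ring G :: ('a \<Rightarrow> 'k::field) ring" by (rule group_ring_ring)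
  interpret I: ideal "comm_ideal G :: ('a \<Rightarrow> 'k) set" "group_ring G :: ('a \<Rightarrow> 'k::field) ring" by (rule comm_ideal_ideal)
  define J' where "J' = {y \<in> carrier (group_ring G :: ('a \<Rightarrow> 'k::field) ring). gstar G y \<in> (comm_ideal G :: ('a \<Rightarrow> 'k) set)}"
  have "ideal J' (group_ring G :: ('a \<Rightarrow> 'k::field) ring)"
  proof (rule idealI)
    show "ring (group_ring G :: ('a \<Rightarrow> 'k::field) ring)" by (rule group_ring_ring)
    show "subgroup J' (add_monoid (group_ring G :: ('a \<Rightarrow> 'k::field) ring))"
    proof (rule R0.add.subgroupI, goal_cases)
      case 1 show ?case unfolding J'_def by auto
    next
      case 2
      have "\<zero>\<^bsub>group_ring G :: ('a \<Rightarrow> 'k::field) ring\<^esub> \<in> J'"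
        unfolding J'_def using I.zero_closed R0.zero_closed by (simp add: R0_simps gstar_def)
      thus ?case by blast
    next
      case (3 a)
      thus ?case unfolding J'_def a_inv_def[symmetric] using R0.a_inv_closed[unfolded R0_simps] I.a_inv_closed by (simp add: gstar_neg R0_simps)
    next
      case (4 a b)
      thus ?case unfolding J'_def by (simp add: gstar_add R0_simps add_closed I.a_closed[unfolded R0_simps])
    qed
  next
    fix a y assume a: "a \<in> J'" and y: "y \<in> carrier (group_ring G :: ('a \<Rightarrow> 'k::field) ring)"
    show "y \<otimes>\<^bsub>group_ring G\<^esub> a \<in> J'" using a y unfolding J'_def
      by (simp add: R0_simps gstar_mult mult_closed I.I_r_closed[unfolded R0_simps] gstar_closed)
    show "a \<otimes>\<^bsub>group_ring G\<^esub> y \<in> J'" using a y unfolding J'_def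
      by (simp add: R0_simps gstar_mult mult_closed I.I_l_closed[unfolded R0_simps] gstar_closed)
  qed
  moreover have "{a \<otimes>\<^bsub>group_ring G\<^esub> b \<ominus>\<^bsub>group_ring G\<^esub> b \<otimes>\<^bsub>group_ring G\<^esub> a | a b.
        a \<in> carrier (group_ring G) \<and> b \<in> carrier (group_ring G) \<and> gstar G b = b} \<subseteq> J'"
  proof
    fix t assume "t \<in> {a \<otimes>\<^bsub>group_ring G\<^esub> b \<ominus>\<^bsub>group_ring G\<^esub> b \<otimes>\<^bsub>group_ring G\<^esub> a | a b.
        a \<in> carrier (group_ring G :: ('a \<Rightarrow> 'k::field) ring) \<and> b \<in> carrier (group_ring G) \<and> gstar G b = b}"
    then obtain a b where ab: "t = a \<otimes>\<^bsub>group_ring G\<^esub> b \<ominus>\<^bsub>group_ring G\<^esub> b \<otimes>\<^bsub>group_ring G\<^esub> a"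
      "a \<in> carrier (group_ring G :: ('a \<Rightarrow> 'k::field) ring)" "b \<in> carrier (group_ring G :: ('a \<Rightarrow> 'k::field) ring)" "gstar G b = b"
      by blast
    have g1: "gstar G a \<otimes>\<^bsub>group_ring G\<^esub> b \<ominus>\<^bsub>group_ring G\<^esub> b \<otimes>\<^bsub>group_ring G\<^esub> gstar G a \<in> comm_ideal G"
      unfolding comm_ideal_def
      by (rule R0.genideal_self[OF gen_sub, THEN subsetD]) (use ab gstar_closed in \<open>auto simp: R0_simps\<close>)
    have "gstar G t = b \<otimes>\<^bsub>group_ring G\<^esub> gstar G a \<ominus>\<^bsub>group_ring G\<^esub> gstar G a \<otimes>\<^bsub>group_ring G\<^esub> b"
      using ab by (simp add: gstar_minus gstar_mult mult_closed R0_simps)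
    also have "\<dots> = \<ominus>\<^bsub>group_ring G\<^esub> (gstar G a \<otimes>\<^bsub>group_ring G\<^esub> b \<ominus>\<^bsub>group_ring G\<^esub> b \<otimes>\<^bsub>group_ring G\<^esub> gstar G a)"
    proof -
      have ca: "gstar G a \<in> carrier (group_ring G :: ('a \<Rightarrow> 'k::field) ring)" using ab gstar_closed[of a] by (simp add: R0_simps)
      show ?thesis using ca ab(3) by (simp add: R0.minus_eq R0.minus_add R0.a_comm)
    qed
    finally have "gstar G t \<in> comm_ideal G" using g1 I.a_inv_closed by simp
    thus "t \<in> J'" unfolding J'_def using ab by auto
  qed
  ultimately have "comm_ideal G \<subseteq> J'" unfolding comm_ideal_def by (rule R0.genideal_minimal)
  thus ?thesis using x J'_def by auto
qed


lemma AG_ring: "ring (AG G :: ('a \<Rightarrow> 'k::field) set ring)"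
  unfolding AG_def by (rule ideal.quotient_is_ring[OF comm_ideal_ideal])

lemma cls_hom: "cls G \<in> ring_hom (group_ring G :: ('a \<Rightarrow> 'k::field) ring) (AG G)"
proof -
  have "cls G = (\<lambda>x. (comm_ideal G :: ('a \<Rightarrow> 'k::field) set) +>\<^bsub>group_ring G\<^esub> x)"
    by (simp add: cls_def[abs_def])
  thus ?thesis unfolding AG_def using ideal.rcos_ring_hom[OF comm_ideal_ideal] by simp
qed

lemma cls_mult: "x \<in> gr_carrier G \<Longrightarrow> y \<in> gr_carrier G \<Longrightarrow>
  cls G (gr_mult G x y) = cls G x \<otimes>\<^bsub>AG G\<^esub> cls G (y :: 'a \<Rightarrow> 'k::field)"
  using ring_hom_memE(2)[OF cls_hom, of x y] by (simp add: R0_simps)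

lemma cls_add: "x \<in> gr_carrier G \<Longrightarrow> y \<in> gr_carrier G \<Longrightarrow>
  cls G (\<lambda>g. x g + y g) = cls G x \<oplus>\<^bsub>AG G\<^esub> cls G (y :: 'a \<Rightarrow> 'k::field)"
  using ring_hom_memE(3)[OF cls_hom, of x y] by (simp add: R0_simps)

lemma cls_one: "cls G (gr_one G) = (\<one>\<^bsub>AG G\<^esub> :: ('a \<Rightarrow> 'k::field) set)"
  using ring_hom_memE(4)[OF cls_hom] by (simp add: R0_simps)

lemma cls_closed: "x \<in> gr_carrier G \<Longrightarrow> cls G (x :: 'a \<Rightarrow> 'k::field) \<in> carrier (AG G)"
  using ring_hom_memE(1)[OF cls_hom] by (simp add: R0_simps)

lemma carrier_AG: "carrier (AG G :: ('a \<Rightarrow> 'k::field) set ring) = cls G ` gr_carrier G"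
  unfolding AG_def FactRing_def A_RCOSETS_def' cls_def by (auto simp: R0_simps)

lemma cls_eq:
  assumes a: "a \<in> gr_carrier G" and b: "b \<in> gr_carrier G"
    and ab: "a \<ominus>\<^bsub>group_ring G\<^esub> b \<in> (comm_ideal G :: ('a \<Rightarrow> 'k::field) set)"
  shows "cls G a = cls G b"
proof -
  interpret R0: ring "group_ring G :: ('a \<Rightarrow> 'k::field) ring" by (rule group_ring_ring)
  interpret I: ideal "comm_ideal G :: ('a \<Rightarrow> 'k) set" "group_ring G :: ('a \<Rightarrow> 'k::field) ring" by (rule comm_ideal_ideal)
  interpret A: ring "AG G :: ('a \<Rightarrow> 'k::field) set ring" by (rule AG_ring)
  have ac: "a \<in> carrier (group_ring G :: ('a \<Rightarrow> 'k::field) ring)" "b \<in> carrier (group_ring G :: ('a \<Rightarrow> 'k::field) ring)"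
    using a b by (simp_all add: R0_simps)
  have d: "a \<ominus>\<^bsub>group_ring G\<^esub> b \<in> carrier (group_ring G :: ('a \<Rightarrow> 'k::field) ring)" using ac by simp
  have "a = b \<oplus>\<^bsub>group_ring G\<^esub> (a \<ominus>\<^bsub>group_ring G\<^esub> b)" using ac by (simp add: R0.minus_eq R0.a_ac R0.r_neg)
  hence "cls G a = cls G b \<oplus>\<^bsub>AG G\<^esub> cls G (a \<ominus>\<^bsub>group_ring G\<^esub> b)"
    using ring_hom_memE(3)[OF cls_hom ac(2) d] by simp
  also have "cls G (a \<ominus>\<^bsub>group_ring G\<^esub> b) = \<zero>\<^bsub>AG G\<^esub>"
    unfolding cls_def AG_def FactRing_def using I.a_rcos_const[OF ab] by simp
  finally show ?thesis using cls_closed[OF b] by simp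
qed

lemma astar_cls:
  assumes x: "x \<in> gr_carrier G"
  shows "astar G (cls G x) = cls G (gstar G (x :: 'a \<Rightarrow> 'k::field))"
proof -
  interpret I: ideal "comm_ideal G :: ('a \<Rightarrow> 'k) set" "group_ring G :: ('a \<Rightarrow> 'k::field) ring" by (rule comm_ideal_ideal)
  have Ic: "\<And>i. i \<in> (comm_ideal G :: ('a \<Rightarrow> 'k) set) \<Longrightarrow> i \<in> gr_carrier G"
    using I.a_subset by (auto simp: R0_simps)
  show ?thesis
    unfolding astar_def cls_def a_r_coset_def' R0_simps
  proof (auto simp: gstar_add)
    fix i assume i: "i \<in> (comm_ideal G :: ('a \<Rightarrow> 'k) set)"
    show "\<exists>j\<in>comm_ideal G. (\<lambda>g. gstar G i g + gstar G x g) = (\<lambda>g. j g + gstar G x g)"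
      using gstar_I[OF i] by blast
    have "(\<lambda>g. i g + gstar G x g) = gstar G (\<lambda>g. gstar G i g + x g)"
      using gstar_gstar[OF Ic[OF i]] by (simp add: gstar_add)
    thus "(\<lambda>g. i g + gstar G x g) \<in> gstar G ` (\<Union>j\<in>comm_ideal G. {\<lambda>g. j g + x g})"
      using gstar_I[OF i] by blast
  qed
qed

lemma sym_cent:
  assumes b: "b \<in> gr_carrier G" "gstar G b = b" and y: "y \<in> gr_carrier G"
  shows "cls G b \<otimes>\<^bsub>AG G\<^esub> cls G y = cls G y \<otimes>\<^bsub>AG G\<^esub> cls G (b :: 'a \<Rightarrow> 'k::field)"
proof -
  interpret R0: ring "group_ring G :: ('a \<Rightarrow> 'k::field) ring" by (rule group_ring_ring)
  have "gr_mult G y b \<ominus>\<^bsub>group_ring G\<^esub> gr_mult G b y \<in> (comm_ideal G :: ('a \<Rightarrow> 'k) set)"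
    unfolding comm_ideal_def
    by (rule R0.genideal_self[OF gen_sub, THEN subsetD]) (use b y in \<open>auto simp: R0_simps\<close>)
  hence "cls G (gr_mult G y b) = cls G (gr_mult G b y)" using b y by (intro cls_eq) (auto simp: mult_closed)
  thus ?thesis using b y by (simp add: cls_mult)
qed


definition half :: "'a \<Rightarrow> 'k::field" where "half = (\<lambda>g. if g = \<one> then 1 / 2 else 0)"

lemma half_closed: "half \<in> gr_carrier G"
  by (rule grcI) (auto simp: sp_def half_def)

lemma gstar_half: "gstar G half = half"
  unfolding gstar_def half_def by (auto simp: inv_eq_one_eq)

lemma half_half: "(\<lambda>g. half g + half g) = (gr_one G :: 'a \<Rightarrow> 'k::field_char_0)"
  unfolding half_def gr_one_def by auto

lemma inst:
  assumes J: "ideal J (sharp_ring G :: ('a \<Rightarrow> 'k::field_char_0) set ring)"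
  shows "absJ (AG G :: ('a \<Rightarrow> 'k::field_char_0) set ring) (astar G) (cls G half) G (\<lambda>g. cls G (gel G g)) J"
proof -
  interpret A: ring "AG G :: ('a \<Rightarrow> 'k::field_char_0) set ring" by (rule AG_ring)
  have ex: "\<And>Z. Z \<in> carrier (AG G :: ('a \<Rightarrow> 'k::field_char_0) set ring) \<Longrightarrow> \<exists>x \<in> gr_carrier G. Z = cls G x"
    using carrier_AG by auto
  have cent0: "\<And>x y. x \<in> gr_carrier G \<Longrightarrow> y \<in> gr_carrier G \<Longrightarrow>
     (cls G x \<oplus>\<^bsub>AG G\<^esub> astar G (cls G x)) \<otimes>\<^bsub>AG G\<^esub> cls G y = cls G y \<otimes>\<^bsub>AG G\<^esub> (cls G x \<oplus>\<^bsub>AG G\<^esub> astar G (cls G (x :: 'a \<Rightarrow> 'k::field_char_0)))"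
  proof -
    fix x y :: "'a \<Rightarrow> 'k" assume x: "x \<in> gr_carrier G" and y: "y \<in> gr_carrier G"
    have b: "(\<lambda>g. x g + gstar G x g) \<in> gr_carrier G" using x by (simp add: add_closed gstar_closed)
    have bs: "gstar G (\<lambda>g. x g + gstar G x g) = (\<lambda>g. x g + gstar G x g)"
      using x by (simp add: gstar_add gstar_gstar add.commute)
    show "?thesis x y" using sym_cent[OF b bs y] x by (simp add: astar_cls cls_add gstar_closed)
  qed
  show ?thesis
  proof (intro absJ.intro absR.intro absR_axioms.intro absJ_axioms.intro AG_ring, goal_cases)
    case (1 x) then obtain a where a: "a \<in> gr_carrier G" "x = cls G a" using ex by blast
    thus ?case by (simp add: astar_cls cls_closed gstar_closed)
  next
    case (2 x y)
    then obtain a b where a: "a \<in> gr_carrier G" "x = cls G a" "b \<in> gr_carrier G" "y = cls G b" using ex by meson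
    thus ?case by (simp add: astar_cls cls_closed gstar_closed cls_add[symmetric] add_closed gstar_add)
  next
    case (3 x y)
    then obtain a b where a: "a \<in> gr_carrier G" "x = cls G a" "b \<in> gr_carrier G" "y = cls G b" using ex by meson
    thus ?case by (simp add: astar_cls cls_closed gstar_closed cls_mult[symmetric] mult_closed gstar_mult)
  next
    case (4 x) then obtain a where a: "a \<in> gr_carrier G" "x = cls G a" using ex by blast
    thus ?case by (simp add: astar_cls gstar_closed gstar_gstar)
  next
    case (5 x y)
    then obtain a b where a: "a \<in> gr_carrier G" "x = cls G a" "b \<in> gr_carrier G" "y = cls G b" using ex by meson
    thus ?case using cent0 by simp
  next
    case 6 thus ?case by (simp add: cls_closed half_closed)
  next
    case 7
    have "cls G half \<oplus>\<^bsub>AG G\<^esub> cls G half = cls G (\<lambda>g. half g + (half g :: 'k))"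
      by (rule cls_add[symmetric, OF half_closed half_closed])
    also have "\<dots> = \<one>\<^bsub>AG G\<^esub>" by (simp only: half_half cls_one)
    finally show ?case .
  next
    case 8 thus ?case by (simp add: astar_cls half_closed gstar_half)
  next
    case (9 y) then obtain a where a: "a \<in> gr_carrier G" "y = cls G a" using ex by blast
    thus ?case using sym_cent[OF half_closed gstar_half] by simp
  next
    case 10 thus ?case by (rule is_group)
  next
    case (11 g) thus ?case by (simp add: cls_closed gel_closed)
  next
    case 12 thus ?case by (simp add: gel_one cls_one)
  next
    case (13 a b) thus ?case by (simp add: gel_mult[symmetric] cls_mult gel_closed)
  next
    case (14 a) thus ?case by (simp add: astar_cls gel_closed gstar_gel)
  next
    case 15 thus ?case using J unfolding sharp_ring_def sharp_set_def by simp
  qed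
qed

end

theorem mainTheorem4:
  fixes G :: "('a, 'm) monoid_scheme" and K L :: "'a set"
  assumes "group G" and "K \<lhd> G" and "L \<subseteq> K" and "normal_closure G L = K"
  shows "(sharp_ideal G L :: ('a \<Rightarrow> 'k::field_char_0) set set) = sharp_ideal G K"
proof -
  interpret grp: group G by fact
  have Kc: "K \<subseteq> carrier G" using assms(2) normal_imp_subgroup subgroup.subset by blast
  have Lc: "L \<subseteq> carrier G" using assms(3) Kc by blast
  define S where "S M = {abar G (Z \<otimes>\<^bsub>AG G\<^esub> cls G (gel G l)) \<ominus>\<^bsub>AG G\<^esub> abar G (Z \<otimes>\<^bsub>AG G\<^esub> cls G (gel G (inv\<^bsub>G\<^esub> l))) | Z l.
        Z \<in> carrier (AG G :: ('a \<Rightarrow> 'k::field_char_0) set ring) \<and> l \<in> M}" for M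
  have SI: "sharp_ideal G M = genideal (sharp_ring G) (S M)" for M
    unfolding sharp_ideal_def S_def by simp
  have sub: "S L \<subseteq> S K" unfolding S_def using assms(3) by blast
  have key: "S K \<subseteq> J" if J: "ideal J (sharp_ring G)" and SL: "S L \<subseteq> J" for J
  proof -
    interpret A: absJ "AG G :: ('a \<Rightarrow> 'k::field_char_0) set ring" "astar G" "cls G grp.half" G "\<lambda>g. cls G (gel G g)" J
      by (rule grp.inst[OF J])
    have barEq: "abar G Z = A.bar Z" for Z :: "('a \<Rightarrow> 'k) set"
      unfolding abar_def A.bar_def by (simp add: grp.half_def)
    show ?thesis
    proof
      fix t assume "t \<in> S K"
      then obtain Z l where t: "t = abar G (Z \<otimes>\<^bsub>AG G\<^esub> cls G (gel G l)) \<ominus>\<^bsub>AG G\<^esub> abar G (Z \<otimes>\<^bsub>AG G\<^esub> cls G (gel G (inv\<^bsub>G\<^esub> l)))"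
        "Z \<in> carrier (AG G)" "l \<in> K" unfolding S_def by blast
      have gen: "A.bar (Z' \<otimes>\<^bsub>AG G\<^esub> cls G (gel G l')) \<ominus>\<^bsub>AG G\<^esub> A.bar (Z' \<otimes>\<^bsub>AG G\<^esub> cls G (gel G (inv\<^bsub>G\<^esub> l'))) \<in> J"
        if "l' \<in> L" "Z' \<in> carrier (AG G)" for l' Z'
        using SL that unfolding S_def barEq by blast
      have lk: "l \<in> generate G (\<Union>g\<in>carrier G. (\<lambda>l. g \<otimes>\<^bsub>G\<^esub> l \<otimes>\<^bsub>G\<^esub> inv\<^bsub>G\<^esub> g) ` L)"
        using t(3) assms(4) unfolding normal_closure_def by simp
      show "t \<in> J" using A.main_abs[OF Lc gen lk t(2)] t(1) unfolding barEq by simp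
    qed
  qed
  show ?thesis unfolding SI genideal_def
  proof (rule equalityI)
    show "\<Inter> {I. ideal I (sharp_ring G) \<and> S L \<subseteq> I} \<subseteq> \<Inter> {I. ideal I (sharp_ring G) \<and> S K \<subseteq> I}"
      using sub by (intro Inf_superset_mono) blast
    show "\<Inter> {I. ideal I (sharp_ring G) \<and> S K \<subseteq> I} \<subseteq> \<Inter> {I. ideal I (sharp_ring G) \<and> S L \<subseteq> I}"
      using key by (intro Inf_superset_mono) blast
  qed
qed


end
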